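(* Let $s_0,s_1\in\mathbb{R}$ and $p_0,p_1,q_0,q_1\in(0,\infty]$, and set $\frac1p=\frac1{p_0}+\frac1{p_1}$, $\frac1q=\frac1{q_0}+\frac1{q_1}$, $s=s_0+s_1$ (with $1/\infty=0$). Then for every $h\in Z^{p,q}_s$ there exist $F\in Z^{p_0,q_0}_{s_0}$ and $G\in Z^{p_1,q_1}_{s_1}$ such that $h=FG$ and $\|F\|_{Z^{p_0,q_0}_{s_0}}\|G\|_{Z^{p_1,q_1}_{s_1}}\lesssim\|h\|_{Z^{p,q}_s}$.
   Context: Fix $n\ge1$; functions are measurable scalar (or $\mathbb{C}^N$-valued) functions on $\mathbb{R}^{1+n}_+:=(0,\infty)\times\mathbb{R}^n$ (for vector-valued $F$ and scalar $G$ the product is pointwise). Let $\mathcal{Q}(\mathbb{R}^n)$ be a system of dyadic cubes, $\ell(Q)$ the side length, $\overline{Q}:=(\ell(Q),2\ell(Q))\times Q$ and $\mathcal{G}:=\{\overline{Q}\}$. For $q\in(0,\infty)$, $[|f|^q]^{1/q}_{\overline{Q}}:=\big(\iint_{\overline{Q}}|f(\tau,\xi)|^q\frac{d\tau\,d\xi}{\tau^{1+n}}\big)^{1/q}$, and for $q=\infty$ it is the essential supremum of $|f|$ on $\overline{Q}$. For $p,q\in(0,\infty]$, $s\in\mathbb{R}$, $\|f\|_{Z^{p,q}_s}:=\big(\sum_{\overline{Q}\in\mathcal{G}}\ell(Q)^n\big(\ell(Q)^{-s}[|f|^q]^{1/q}_{\overline{Q}}\big)^p\big)^{1/p}$ (supremum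 over $\overline Q$ of $\ell(Q)^{-s}[|f|^q]^{1/q}_{\overline{Q}}$ if $p=\infty$), and $Z^{p,q}_s$ is the set of $f$ with finite quasinorm. *)

theory Defs
  imports "HOL-Analysis.Analysis"
begin

definition enn_powr :: "ennreal \<Rightarrow> real \<Rightarrow> ennreal" where
  "enn_powr x r = (if x = \<infinity> then \<infinity> else ennreal (enn2real x powr r))"

text \<open>Dyadic cubes in R^n, indexed injectively by (k, m) with k :: int, m :: int^n:
  Q(k,m) = product over i of [m_i 2^(-k), (m_i + 1) 2^(-k)), side length 2^(-k).\<close>
definition dyadic_len :: "int \<times> (int ^ 'n) \<Rightarrow> real" where
  "dyadic_len km = 2 powr (- real_of_int (fst km))"

definition dyadic_cube :: "int \<times> (int ^ 'n::finite) \<Rightarrow> (real ^ 'n) set" where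
  "dyadic_cube km = {\<xi>. \<forall>i. real_of_int (snd km $ i) * dyadic_len km \<le> \<xi> $ i
                          \<and> \<xi> $ i < (real_of_int (snd km $ i) + 1) * dyadic_len km}"

text \<open>Whitney box  Qbar = (l(Q), 2 l(Q)) x Q  in R^{1+n}_+ = (0,\<infinity>) x R^n.\<close>
definition whitney_box :: "int \<times> (int ^ 'n::finite) \<Rightarrow> (real \<times> (real ^ 'n)) set" where
  "whitney_box km = {dyadic_len km <..< 2 * dyadic_len km} \<times> dyadic_cube km"

definition local_Lq :: "ennreal \<Rightarrow> (real \<times> (real ^ ('n::finite)) \<Rightarrow> 'v::real_normed_vector)
    \<Rightarrow> int \<times> (int ^ 'n) \<Rightarrow> ennreal" where
  "local_Lq q f km =
     (if q = \<infinity> then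
        Inf {C. AE x in lebesgue. x \<in> whitney_box km \<longrightarrow> ennreal (norm (f x)) \<le> C}
      else
        enn_powr (\<integral>\<^sup>+ x. indicator (whitney_box km) x *
                    ennreal (norm (f x) powr enn2real q / fst x ^ (1 + CARD('n))) \<partial>lebesgue)
                 (1 / enn2real q))"

definition Z_norm :: "ennreal \<Rightarrow> ennreal \<Rightarrow> real \<Rightarrow>
    (real \<times> (real ^ ('n::finite)) \<Rightarrow> 'v::real_normed_vector) \<Rightarrow> ennreal" where
  "Z_norm p q s f =
     (if p = \<infinity> then
        (SUP km\<in>(UNIV :: (int \<times> (int ^ 'n)) set).
           ennreal (dyadic_len km powr (- s)) * local_Lq q f km)
      else
        enn_powr (\<integral>\<^sup>+ km. ennreal (dyadic_len km ^ CARD('n)) *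
                    enn_powr (ennreal (dyadic_len km powr (- s)) * local_Lq q f km) (enn2real p)
                  \<partial>count_space (UNIV :: (int \<times> (int ^ 'n)) set))
                 (1 / enn2real p))"

definition Z_space :: "ennreal \<Rightarrow> ennreal \<Rightarrow> real \<Rightarrow>
    (real \<times> (real ^ ('n::finite)) \<Rightarrow> 'v::real_normed_vector) set" where
  "Z_space p q s = {f. f \<in> borel_measurable lebesgue \<and> Z_norm p q s f < \<infinity>}"

end

theory Submission
  imports Defs
begin


lemma dyadic_len_pos: "dyadic_len km > 0" by (simp add: dyadic_len_def)

lemma box_eq: "whitney_box km = {x. dyadic_len km < fst x \<and> fst x < 2 * dyadic_len km \<and>
   (\<forall>i. real_of_int (snd km $ i) * dyadic_len km \<le> snd x $ i \<and> snd x $ i < (real_of_int (snd km $ i) + 1) * dyadic_len km)}"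
  by (auto simp: whitney_box_def dyadic_cube_def)

lemma cube_borel: "dyadic_cube (km :: int \<times> (int ^ 'n::finite)) \<in> sets borel"
proof (cases km)
  case (Pair a b) show ?thesis unfolding Pair dyadic_cube_def by measurable
qed

lemma box_borel: "whitney_box (km :: int \<times> (int ^ 'n::finite)) \<in> sets borel"
  unfolding whitney_box_def borel_prod[symmetric] using cube_borel[of km] by (intro pair_measureI) simp_all

lemma box_leb: "whitney_box (km :: int \<times> (int ^ 'n::finite)) \<in> sets lebesgue"
  using box_borel[of km] by (simp add: sets_completionI_sets)

lemma pow2_step: "(k::int) < k' \<Longrightarrow> 2 * 2 powr (- real_of_int k') \<le> 2 powr (- real_of_int k)"
proof -
  assume "k < k'"
  then have "1 - real_of_int k' \<le> - real_of_int k" by linarith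
  then have "2 powr (1 - real_of_int k') \<le> 2 powr (- real_of_int k)" by (intro powr_mono) auto
  then show ?thesis by (simp add: powr_diff powr_minus field_simps)
qed

lemma box_unique:
  assumes "x \<in> whitney_box (km :: int \<times> (int ^ 'n::finite))" "x \<in> whitney_box km'"
  shows "km = km'"
proof -
  obtain k m k' m' where e: "km = (k,m)" "km' = (k',m')" by force
  have kk: "k = k'"
  proof (rule ccontr)
    assume "k \<noteq> k'"
    then consider "k < k'" | "k' < k" by linarith
    then show False
    proof cases
      case 1
      then have "2 * dyadic_len km' \<le> dyadic_len km" unfolding e dyadic_len_def using pow2_step by simp
      then show False using assms unfolding whitney_box_def by auto
    next
      case 2
      then have "2 * dyadic_len km \<le> dyadic_len km'" unfolding e dyadic_len_def using pow2_step by simp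
      then show False using assms unfolding whitney_box_def by auto
    qed
  qed
  have ll: "dyadic_len km = dyadic_len km'" unfolding e kk dyadic_len_def by simp
  have "m $ i = m' $ i" for i
  proof -
    let ?l = "dyadic_len km"
    have l: "?l > 0" by (rule dyadic_len_pos)
    have "real_of_int (m $ i) \<le> snd x $ i / ?l" "snd x $ i / ?l < real_of_int (m $ i) + 1"
      using assms(1) l unfolding e whitney_box_def dyadic_cube_def by (auto simp: field_simps)
    moreover have "real_of_int (m' $ i) \<le> snd x $ i / ?l" "snd x $ i / ?l < real_of_int (m' $ i) + 1"
      using assms(2) l ll unfolding e whitney_box_def dyadic_cube_def by (auto simp: field_simps)
    ultimately show ?thesis by (metis floor_unique)
  qed
  then show ?thesis using e kk by (simp add: vec_eq_iff)
qed

lemma fst_leb[measurable]: "(\<lambda>x::real \<times> (real ^ 'n::finite). fst x) \<in> borel_measurable lebesgue"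
  by (rule measurable_completion) (simp add: measurable_lborel1 borel_measurable_continuous_onI continuous_on_fst continuous_on_id)

lemma ep_ennreal: "c \<ge> 0 \<Longrightarrow> enn_powr (ennreal c) r = ennreal (c powr r)"
  by (simp add: enn_powr_def)
lemma ep_top[simp]: "enn_powr \<infinity> r = \<infinity>" by (simp add: enn_powr_def)
lemma ep_top'[simp]: "enn_powr top r = top" by (simp add: enn_powr_def)
lemma ep_zero[simp]: "enn_powr 0 r = 0" by (simp add: enn_powr_def)
lemma ep_fin: "enn_powr x r < top \<longleftrightarrow> x < top"
  by (auto simp: enn_powr_def top.not_eq_extremum)
lemma ep_mono: assumes "x \<le> y" "r \<ge> 0" shows "enn_powr x r \<le> enn_powr y r"
proof (cases y rule: ennreal_cases)
  case (real b)
  show ?thesis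
  proof (cases x rule: ennreal_cases)
    case (real a)
    then have "a \<le> b" using assms(1) \<open>y = ennreal b\<close> \<open>0 \<le> b\<close> by simp
    then show ?thesis using real \<open>y = ennreal b\<close> \<open>0 \<le> b\<close> assms(2)
      by (simp add: ep_ennreal powr_mono2)
  next
    case top then show ?thesis using assms(1) \<open>y = ennreal b\<close> by (simp add: top_unique)
  qed
next
  case top then show ?thesis by simp
qed
lemma ep_add: "enn_powr x r * enn_powr x t = enn_powr x (r + t)"
proof (cases x rule: ennreal_cases)
  case (real a)
  have "ennreal (a powr r) * ennreal (a powr t) = ennreal (a powr r * a powr t)"
    by (rule ennreal_mult[symmetric]) auto
  then show ?thesis using real by (simp add: ep_ennreal powr_add)
next
  case top then show ?thesis by simp
qed

lemma einv2: "inverse (inverse (x::ennreal)) = x"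
proof (cases x rule: ennreal_cases)
  case (real r)
  show ?thesis
  proof (cases "r = 0")
    case True then show ?thesis using real by simp
  next
    case False then have "r > 0" using real by simp
    then show ?thesis using real by (simp add: inverse_ennreal)
  qed
next
  case top then show ?thesis by simp
qed

lemma exps:
  fixes a b c :: ennreal
  assumes "a > 0" "b > 0" "inverse c = inverse a + inverse b"
  shows "c > 0" "(c = \<infinity>) = (a = \<infinity> \<and> b = \<infinity>)"
    "a = \<infinity> \<Longrightarrow> c = b" "b = \<infinity> \<Longrightarrow> c = a"
proof -
  have ia: "inverse a \<noteq> top" "inverse b \<noteq> top" using assms by auto
  then have ic: "inverse c \<noteq> top" using assms(3) by (simp add: ennreal_add_eq_top)
  then have "c \<noteq> 0" by auto
  then show c0: "c > 0" by (simp add: zero_less_iff_neq_zero)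
  show ctop: "(c = \<infinity>) = (a = \<infinity> \<and> b = \<infinity>)"
  proof
    assume "c = \<infinity>" then have "inverse a + inverse b = 0" using assms(3) by simp
    then show "a = \<infinity> \<and> b = \<infinity>" by simp
  next
    assume "a = \<infinity> \<and> b = \<infinity>" then have "inverse c = 0" using assms(3) by simp
    then show "c = \<infinity>" by simp
  qed
  show "a = \<infinity> \<Longrightarrow> c = b"
  proof -
    assume "a = \<infinity>" then have "inverse c = inverse b" using assms(3) by simp
    then have "inverse (inverse c) = inverse (inverse b)" by simp
    then show "c = b" by (simp add: einv2)
  qed
  show "b = \<infinity> \<Longrightarrow> c = a"
  proof -
    assume "b = \<infinity>" then have "inverse c = inverse a" using assms(3) by simp
    then have "inverse (inverse c) = inverse (inverse a)" by simp
    then show "c = a" by (simp add: einv2)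
  qed
qed
lemma einv: "enn2real (inverse x) = inverse (enn2real x)"
proof (cases x rule: ennreal_cases)
  case (real r)
  show ?thesis
  proof (cases "r = 0")
    case True then show ?thesis using real by simp
  next
    case False then have "r > 0" using real by simp
    then show ?thesis using real by (simp add: inverse_ennreal)
  qed
next
  case top then show ?thesis by simp
qed

lemma exps_real:
  fixes a b c :: ennreal
  assumes "a > 0" "b > 0" "inverse c = inverse a + inverse b" "c \<noteq> \<infinity>"
  shows "enn2real c * (inverse (enn2real a) + inverse (enn2real b)) = 1"
proof -
  have ia: "inverse a \<noteq> top" "inverse b \<noteq> top" using assms by auto
  have "enn2real (inverse a + inverse b) = enn2real (inverse a) + enn2real (inverse b)"
    by (rule enn2real_plus) (use ia in \<open>simp_all only: top.not_eq_extremum\<close>)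
  then have "enn2real (inverse c) = enn2real (inverse a) + enn2real (inverse b)"
    using assms(3) by simp
  then have "inverse (enn2real c) = inverse (enn2real a) + inverse (enn2real b)" by (simp add: einv)
  moreover have "enn2real c > 0" using exps(1)[OF assms(1-3)] assms(4)
    by (simp add: enn2real_positive_iff top.not_eq_extremum)
  ultimately show ?thesis by (metis right_inverse less_irrefl)
qed

abbreviation "wint r (f :: real \<times> (real ^ ('n::finite)) \<Rightarrow> 'v::real_normed_vector) km \<equiv>
  (\<integral>\<^sup>+ x. indicator (whitney_box km) x *
      ennreal (norm (f x) powr enn2real r / fst x ^ (1 + CARD('n))) \<partial>lebesgue)"

lemma box_fst_pos: "x \<in> whitney_box km \<Longrightarrow> fst x > 0"
  using dyadic_len_pos[of km] by (auto simp: whitney_box_def)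

lemma local_zero:
  fixes f :: "real \<times> (real ^ ('n::finite)) \<Rightarrow> 'v::real_normed_vector"
  assumes "AE x in lebesgue. x \<in> whitney_box km \<longrightarrow> f x = 0" "r > 0"
  shows "local_Lq r f km = 0"
proof (cases "r = \<infinity>")
  case True
  have "0 \<in> {C. AE x in lebesgue. x \<in> whitney_box km \<longrightarrow> ennreal (norm (f x)) \<le> C}"
    using assms(1) by (auto elim!: eventually_mono)
  then have "Inf {C. AE x in lebesgue. x \<in> whitney_box km \<longrightarrow> ennreal (norm (f x)) \<le> C} \<le> 0"
    by (rule Inf_lower)
  then show ?thesis using True unfolding local_Lq_def by simp
next
  case False
  have "wint r f km = (\<integral>\<^sup>+ x. 0 \<partial>(lebesgue :: (real \<times> (real ^ 'n)) measure))"
    using assms(1) by (intro nn_integral_cong_AE) (auto elim!: eventually_mono simp: indicator_def)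
  then show ?thesis using False by (simp add: local_Lq_def)
qed

lemma local_inf_le:
  fixes f :: "real \<times> (real ^ ('n::finite)) \<Rightarrow> 'v::real_normed_vector"
  assumes "AE x in lebesgue. x \<in> whitney_box km \<longrightarrow> norm (f x) \<le> c"
  shows "local_Lq \<infinity> f km \<le> ennreal c"
proof -
  have "ennreal c \<in> {C. AE x in lebesgue. x \<in> whitney_box km \<longrightarrow> ennreal (norm (f x)) \<le> C}"
    using assms by (auto elim!: eventually_mono intro: ennreal_leI)
  then show ?thesis unfolding local_Lq_def by (simp add: Inf_lower)
qed

lemma inf_attained:
  fixes f :: "real \<times> (real ^ ('n::finite)) \<Rightarrow> 'v::real_normed_vector"
  shows "AE x in lebesgue. x \<in> whitney_box km \<longrightarrow> ennreal (norm (f x)) \<le> local_Lq \<infinity> f km"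
proof -
  define S where "S = {C. AE x in lebesgue. x \<in> whitney_box km \<longrightarrow> ennreal (norm (f x)) \<le> C}"
  have a: "local_Lq \<infinity> f km = Inf S" by (simp add: local_Lq_def S_def)
  have "AE x in lebesgue. \<forall>n::nat. x \<in> whitney_box km \<longrightarrow> ennreal (norm (f x)) \<le> Inf S + ennreal (1 / Suc n)"
  proof (rule AE_all_countable[THEN iffD2], rule allI)
    fix n :: nat
    show "AE x in lebesgue. x \<in> whitney_box km \<longrightarrow> ennreal (norm (f x)) \<le> Inf S + ennreal (1 / Suc n)"
    proof (cases "Inf S = top")
      case True then show ?thesis unfolding True by simp
    next
      case False
      then have "Inf S + 0 < Inf S + ennreal (1 / Suc n)"
        by (subst ennreal_add_left_cancel_less) auto
      then obtain C where "C \<in> S" "C < Inf S + ennreal (1 / Suc n)"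
        by (auto simp: Inf_less_iff)
      then show ?thesis unfolding S_def by (auto elim!: eventually_mono)
    qed
  qed
  then show ?thesis unfolding a
  proof (rule eventually_mono, intro impI)
    fix x assume h: "\<forall>n::nat. x \<in> whitney_box km \<longrightarrow> ennreal (norm (f x)) \<le> Inf S + ennreal (1 / Suc n)"
      and x: "x \<in> whitney_box km"
    show "ennreal (norm (f x)) \<le> Inf S"
    proof (rule ennreal_le_epsilon)
      fix e :: real assume "0 < e"
      then obtain n where n: "inverse (real (Suc n)) < e" using reals_Archimedean by blast
      have "ennreal (norm (f x)) \<le> Inf S + ennreal (1 / Suc n)" using h x by blast
      also have "\<dots> \<le> Inf S + ennreal e" using n by (intro add_left_mono ennreal_leI) (simp add: field_simps)
      finally show "ennreal (norm (f x)) \<le> Inf S + ennreal e" .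
    qed
  qed
qed


lemma wint_meas:
  fixes f :: "real \<times> (real ^ ('n::finite)) \<Rightarrow> 'v::real_normed_vector"
  assumes [measurable]: "f \<in> borel_measurable lebesgue"
  shows "(\<lambda>x. indicator (whitney_box km) x *
      ennreal (norm (f x) powr R / fst x ^ (1 + CARD('n)))) \<in> borel_measurable lebesgue"
proof -
  have nf: "(\<lambda>x. norm (f x)) \<in> borel_measurable lebesgue" using assms by measurable
  have "(\<lambda>x. norm (f x) powr R / fst x ^ (1 + CARD('n))) \<in> borel_measurable lebesgue"
    by (intro nf borel_measurable_divide powr_real_measurable borel_measurable_norm assms
        borel_measurable_power fst_leb borel_measurable_const)
  then have "(\<lambda>x. ennreal (norm (f x) powr R / fst x ^ (1 + CARD('n)))) \<in> borel_measurable lebesgue"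
    by (rule measurable_compose[OF _ measurable_ennreal])
  then show ?thesis by (intro borel_measurable_times_ennreal borel_measurable_indicator box_leb)
qed

lemma fin_zero:
  fixes f :: "real \<times> (real ^ ('n::finite)) \<Rightarrow> 'v::real_normed_vector"
  assumes "r \<noteq> \<infinity>" "r > 0" "f \<in> borel_measurable lebesgue" "local_Lq r f km = 0"
  shows "AE x in lebesgue. x \<in> whitney_box km \<longrightarrow> f x = 0"
proof -
  have R: "enn2real r > 0" using assms by (simp add: enn2real_positive_iff top.not_eq_extremum)
  have e: "enn_powr (wint r f km) (1 / enn2real r) = 0" using assms by (simp add: local_Lq_def)
  have "wint r f km = 0"
  proof (cases "wint r f km" rule: ennreal_cases)
    case (real i)
    then show ?thesis using e R by (simp add: ep_ennreal)
  next
    case top then show ?thesis using e[unfolded top] by simp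
  qed
  then have "AE x in lebesgue. indicator (whitney_box km) x *
      ennreal (norm (f x) powr enn2real r / fst x ^ (1 + CARD('n))) = 0"
    using nn_integral_0_iff_AE[OF wint_meas[OF assms(3)]] by simp
  then show ?thesis
  proof (rule eventually_mono, intro impI)
    fix x assume h: "indicator (whitney_box km) x *
      ennreal (norm (f x) powr enn2real r / fst x ^ (1 + CARD('n))) = 0" and x: "x \<in> whitney_box km"
    have d: "fst x ^ (1 + CARD('n)) > 0" using box_fst_pos[OF x] by simp
    have "ennreal (norm (f x) powr enn2real r / fst x ^ (1 + CARD('n))) = 0" using h x by simp
    then have "norm (f x) powr enn2real r / fst x ^ (1 + CARD('n)) \<le> 0" by (simp only: ennreal_eq_0_iff)
    then have "norm (f x) powr enn2real r \<le> 0" using d by (meson divide_le_0_iff not_less)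
    then show "f x = 0" by simp
  qed
qed

lemma fin_val:
  fixes f :: "real \<times> (real ^ ('n::finite)) \<Rightarrow> 'v::real_normed_vector"
  assumes "r \<noteq> \<infinity>" "r > 0" "local_Lq r f km = ennreal c" "c > 0"
  shows "wint r f km = ennreal (c powr enn2real r)"
proof -
  have R: "enn2real r > 0" using assms by (simp add: enn2real_positive_iff top.not_eq_extremum)
  have e: "enn_powr (wint r f km) (1 / enn2real r) = ennreal c" using assms by (simp add: local_Lq_def)
  show ?thesis
  proof (cases "wint r f km" rule: ennreal_cases)
    case (real i)
    then have "i powr (1 / enn2real r) = c" using e assms(4) by (simp add: ep_ennreal)
    then have "c powr enn2real r = i" using R real by (auto simp: powr_powr abs_of_nonneg)
    then show ?thesis using real by simp
  next
    case top then show ?thesis using e[unfolded top] by simp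
  qed
qed

lemma local_fin_eq:
  fixes f :: "real \<times> (real ^ ('n::finite)) \<Rightarrow> 'v::real_normed_vector"
    and g :: "real \<times> (real ^ ('n::finite)) \<Rightarrow> 'w::real_normed_vector"
  assumes "r \<noteq> \<infinity>" "c \<ge> 0" "g \<in> borel_measurable lebesgue"
    "\<And>x. x \<in> whitney_box km \<Longrightarrow> norm (f x) powr enn2real r = c * norm (g x) powr enn2real q"
    "wint q g km = ennreal i" "i \<ge> 0"
  shows "local_Lq r f km = ennreal ((c * i) powr (1 / enn2real r))"
proof -
  have "wint r f km = (\<integral>\<^sup>+ x. ennreal c * (indicator (whitney_box km) x *
      ennreal (norm (g x) powr enn2real q / fst x ^ (1 + CARD('n)))) \<partial>lebesgue)"
  proof (rule nn_integral_cong)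
    fix x show "indicator (whitney_box km) x * ennreal (norm (f x) powr enn2real r / fst x ^ (1 + CARD('n))) =
       ennreal c * (indicator (whitney_box km) x * ennreal (norm (g x) powr enn2real q / fst x ^ (1 + CARD('n))))"
    proof (cases "x \<in> whitney_box km")
      case True
      then have "fst x > 0" by (rule box_fst_pos)
      then show ?thesis using True assms(2) assms(4)[OF True] by (simp add: ennreal_mult'[symmetric] mult_ac)
    qed simp
  qed
  also have "\<dots> = ennreal c * wint q g km" by (rule nn_integral_cmult[OF wint_meas[OF assms(3)]])
  finally show ?thesis using assms(1,2,5,6) by (simp add: local_Lq_def ennreal_mult'[symmetric] ep_ennreal)
qed

lemma count_point_le: "f y \<le> (\<integral>\<^sup>+x. f x \<partial>count_space UNIV)"
proof -
  have "f y = (\<integral>\<^sup>+x. f x * indicator {y} x \<partial>count_space UNIV)" by simp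
  also have "\<dots> \<le> (\<integral>\<^sup>+x. f x \<partial>count_space UNIV)"
    by (intro nn_integral_mono) (simp split: split_indicator)
  finally show ?thesis .
qed

lemma a_fin:
  fixes h :: "real \<times> (real ^ ('n::finite)) \<Rightarrow> 'v::real_normed_vector"
  assumes "h \<in> Z_space p q s"
  shows "local_Lq q h km < \<infinity>"
proof -
  have N: "Z_norm p q s h < \<infinity>" using assms by (simp add: Z_space_def)
  have lp: "ennreal (dyadic_len km powr (- s)) > 0" using dyadic_len_pos[of km] by simp
  show ?thesis
  proof (cases "p = \<infinity>")
    case True
    have "ennreal (dyadic_len km powr (- s)) * local_Lq q h km \<le> Z_norm p q s h"
      using True unfolding Z_norm_def by (auto intro: SUP_upper)
    then have "ennreal (dyadic_len km powr (- s)) * local_Lq q h km < \<infinity>" using N by (meson le_less_trans)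
    then show ?thesis using lp by (auto simp: ennreal_mult_less_top top.not_eq_extremum)
  next
    case False
    let ?T = "\<lambda>km. ennreal (dyadic_len km ^ CARD('n)) *
                    enn_powr (ennreal (dyadic_len km powr (- s)) * local_Lq q h km) (enn2real p)"
    have "enn_powr (\<integral>\<^sup>+ km. ?T km \<partial>count_space UNIV) (1 / enn2real p) < \<infinity>"
      using N False by (simp add: Z_norm_def)
    then have "(\<integral>\<^sup>+ km. ?T km \<partial>count_space UNIV) < \<infinity>" by (simp add: ep_fin)
    then have "?T km < \<infinity>" using count_point_le[of ?T km] by (meson le_less_trans)
    moreover have "ennreal (dyadic_len km ^ CARD('n)) > 0" using dyadic_len_pos[of km] by simp
    ultimately have "enn_powr (ennreal (dyadic_len km powr (- s)) * local_Lq q h km) (enn2real p) < \<infinity>"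
      by (auto simp: ennreal_mult_less_top top.not_eq_extremum)
    then have "ennreal (dyadic_len km powr (- s)) * local_Lq q h km < \<infinity>" by (simp add: ep_fin)
    then show ?thesis using lp by (auto simp: ennreal_mult_less_top top.not_eq_extremum)
  qed
qed

lemma Z_fin_bound:
  fixes f :: "real \<times> (real ^ ('n::finite)) \<Rightarrow> 'v::real_normed_vector"
  assumes "p' \<noteq> \<infinity>"
    "\<And>km. ennreal (dyadic_len km powr (- s')) * local_Lq q' f km \<le> B km"
    "\<And>km. ennreal (dyadic_len km ^ CARD('n)) * enn_powr (B km) (enn2real p') \<le> T km"
  shows "Z_norm p' q' s' f \<le> enn_powr (\<integral>\<^sup>+ km. T km \<partial>count_space (UNIV :: (int \<times> (int ^ 'n)) set)) (1 / enn2real p')"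
proof -
  have "Z_norm p' q' s' f = enn_powr (\<integral>\<^sup>+ km. ennreal (dyadic_len km ^ CARD('n)) *
                    enn_powr (ennreal (dyadic_len km powr (- s')) * local_Lq q' f km) (enn2real p')
                  \<partial>count_space (UNIV :: (int \<times> (int ^ 'n)) set)) (1 / enn2real p')"
    using assms(1) unfolding Z_norm_def by (simp only: if_False)
  also have "\<dots> \<le> enn_powr (\<integral>\<^sup>+ km. T km \<partial>count_space (UNIV :: (int \<times> (int ^ 'n)) set)) (1 / enn2real p')"
  proof (rule ep_mono[OF nn_integral_mono])
    fix km :: "int \<times> (int ^ 'n)"
    have "enn_powr (ennreal (dyadic_len km powr (- s')) * local_Lq q' f km) (enn2real p') \<le> enn_powr (B km) (enn2real p')"
      by (rule ep_mono[OF assms(2)]) simp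
    then show "ennreal (dyadic_len km ^ CARD('n)) *
                    enn_powr (ennreal (dyadic_len km powr (- s')) * local_Lq q' f km) (enn2real p') \<le> T km"
      using assms(3)[of km] by (meson mult_left_mono order.trans zero_le)
  qed simp
  finally show ?thesis .
qed

lemma Z_inf_bound:
  fixes f :: "real \<times> (real ^ ('n::finite)) \<Rightarrow> 'v::real_normed_vector"
  assumes "\<And>km. ennreal (dyadic_len km powr (- s')) * local_Lq q' f km \<le> c"
  shows "Z_norm \<infinity> q' s' f \<le> c"
  unfolding Z_norm_def by (simp only: simp_thms if_True) (rule SUP_least, rule assms)

lemma pw0: "(y::real) \<ge> 0 \<Longrightarrow> y powr 0 \<le> 1"
  by (cases "y = 0") auto

lemma good_local:
  fixes f :: "real \<times> (real ^ ('n::finite)) \<Rightarrow> 'v::real_normed_vector"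
    and h :: "real \<times> (real ^ ('n::finite)) \<Rightarrow> 'w::real_normed_vector"
  assumes nf: "\<And>x. x \<in> whitney_box km \<Longrightarrow> norm (f x) = Xc * (norm (h x) / A) powr \<phi>"
    and Xc: "Xc > 0" and A: "A > 0" and hm: "h \<in> borel_measurable lebesgue"
    and fin: "r \<noteq> \<infinity> \<Longrightarrow> \<phi> * enn2real r = enn2real q \<and> enn2real r > 0 \<and> enn2real q > 0 \<and>
               wint q h km = ennreal (A powr enn2real q)"
    and inf: "r = \<infinity> \<Longrightarrow> AE x in lebesgue. x \<in> whitney_box km \<longrightarrow> (norm (h x) / A) powr \<phi> \<le> 1"
  shows "local_Lq r f km \<le> ennreal Xc"
proof (cases "r = \<infinity>")
  case True
  have "AE x in lebesgue. x \<in> whitney_box km \<longrightarrow> norm (f x) \<le> Xc"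
    using inf[OF True]
  proof (rule eventually_mono, intro impI)
    fix x assume "x \<in> whitney_box km \<longrightarrow> (norm (h x) / A) powr \<phi> \<le> 1" "x \<in> whitney_box km"
    then have "Xc * (norm (h x) / A) powr \<phi> \<le> Xc * 1" using Xc by (intro mult_left_mono) auto
    then show "norm (f x) \<le> Xc" using nf \<open>x \<in> whitney_box km\<close> by simp
  qed
  then show ?thesis using True local_inf_le by blast
next
  case False
  define R where "R = enn2real r"
  define Q where "Q = enn2real q"
  have fr: "\<phi> * R = Q" "R > 0" "Q > 0" "wint q h km = ennreal (A powr Q)"
    using fin[OF False] by (auto simp: R_def Q_def)
  have eq: "norm (f x) powr R = (Xc powr R / A powr Q) * norm (h x) powr Q"
    if x: "x \<in> whitney_box km" for x
  proof -
    have "norm (f x) powr R = (Xc * (norm (h x) / A) powr \<phi>) powr R" using nf[OF x] by simp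
    also have "\<dots> = Xc powr R * ((norm (h x) / A) powr \<phi>) powr R"
      using Xc by (simp add: powr_mult)
    also have "\<dots> = Xc powr R * (norm (h x) / A) powr Q"
      by (simp add: powr_powr fr(1))
    also have "\<dots> = (Xc powr R / A powr Q) * norm (h x) powr Q"
      using A by (simp add: powr_divide)
    finally show ?thesis .
  qed
  have "local_Lq r f km = ennreal (((Xc powr R / A powr Q) * A powr Q) powr (1 / R))"
    using local_fin_eq[where r=r and c="Xc powr R / A powr Q" and g=h and km=km and f=f and q=q and i="A powr Q"]
      False hm eq fr(4) A Xc
    unfolding R_def Q_def by auto
  also have "\<dots> = ennreal Xc" using A Xc fr(2) by (simp add: powr_powr)
  finally show ?thesis by simp
qed

lemma piecewise_boxes:
  fixes f :: "real \<times> (real ^ ('n::finite)) \<Rightarrow> 'b::topological_space"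
  assumes box: "\<And>km :: int \<times> (int ^ 'n). \<exists>g \<in> borel_measurable lebesgue. \<forall>x \<in> whitney_box km. f x = g x"
    and out: "\<exists>g \<in> borel_measurable lebesgue. \<forall>x. (\<forall>km :: int \<times> (int ^ 'n). x \<notin> whitney_box km) \<longrightarrow> f x = g x"
  shows "f \<in> borel_measurable lebesgue"
proof -
  let ?U = "\<Union>km :: int \<times> (int ^ 'n). whitney_box km"
  let ?C = "range (whitney_box :: int \<times> (int ^ 'n) \<Rightarrow> _) \<union> {- ?U}"
  have U: "?U \<in> sets lebesgue"
    by (rule sets.countable_UN'') (auto intro: countableI_type box_leb)
  show ?thesis
  proof (rule measurable_piecewise_restrict[where C = ?C])
    show "countable ?C" by (intro countable_Un countable_image countableI_type) simp
    show "space lebesgue \<subseteq> \<Union> ?C" by auto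
  next
    fix \<Omega> assume "\<Omega> \<in> ?C"
    then consider km where "\<Omega> = whitney_box km" | "\<Omega> = - ?U" by blast
    then show "\<Omega> \<inter> space lebesgue \<in> sets lebesgue"
    proof cases
      case 1 then show ?thesis by (simp add: box_leb)
    next
      case 2
      have "space lebesgue - ?U \<in> sets lebesgue" using U by (rule sets.compl_sets)
      then show ?thesis using 2 by (simp add: Diff_eq Int_commute)
    qed
  next
    fix \<Omega> assume "\<Omega> \<in> ?C"
    then consider km where "\<Omega> = whitney_box km" | "\<Omega> = - ?U" by blast
    then show "f \<in> measurable (restrict_space lebesgue \<Omega>) borel"
    proof cases
      case 1
      obtain g where g: "g \<in> borel_measurable lebesgue" "\<forall>x \<in> whitney_box km. f x = g x" using box by blast
      have "g \<in> measurable (restrict_space lebesgue \<Omega>) borel" by (rule measurable_restrict_space1[OF g(1)])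
      moreover have "\<And>w. w \<in> space (restrict_space lebesgue \<Omega>) \<Longrightarrow> f w = g w"
        using g(2) 1 by (simp add: space_restrict_space)
      ultimately show ?thesis using measurable_cong by blast
    next
      case 2
      obtain g where g: "g \<in> borel_measurable lebesgue" "\<forall>x. (\<forall>km :: int \<times> (int ^ 'n). x \<notin> whitney_box km) \<longrightarrow> f x = g x"
        using out by blast
      have "g \<in> measurable (restrict_space lebesgue \<Omega>) borel" by (rule measurable_restrict_space1[OF g(1)])
      moreover have "f w = g w" if "w \<in> space (restrict_space lebesgue \<Omega>)" for w
      proof -
        have "\<forall>km :: int \<times> (int ^ 'n). w \<notin> whitney_box km" using that 2 by (simp add: space_restrict_space)
        then show ?thesis using g(2) by blast
      qed
      ultimately show ?thesis using measurable_cong by blast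
    qed
  qed
qed

lemma scaleR_meas:
  fixes c :: "'a \<Rightarrow> real" and h :: "'a \<Rightarrow> 'v::real_normed_vector"
  assumes c: "c \<in> borel_measurable M" and h: "h \<in> borel_measurable M"
  shows "(\<lambda>x. c x *\<^sub>R h x) \<in> borel_measurable M"
proof (rule borel_measurableI)
  fix S :: "'v set" assume S: "open S"
  obtain B :: "real set set" where B: "countable B" "topological_basis B" using ex_countable_basis by blast
  define W where "W b = \<Union>{V. open V \<and> b \<times> V \<subseteq> {p :: real \<times> 'v. fst p *\<^sub>R snd p \<in> S}}" for b
  have Wo: "open (W b)" for b unfolding W_def by auto
  have oP: "open {p :: real \<times> 'v. fst p *\<^sub>R snd p \<in> S}"
  proof -
    have "open ((\<lambda>p :: real \<times> 'v. fst p *\<^sub>R snd p) -` S)"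
      by (rule continuous_open_vimage[OF S]) (intro continuous_intros)
    then show ?thesis by (simp add: vimage_def)
  qed
  have eqs: "(\<lambda>x. c x *\<^sub>R h x) -` S \<inter> space M = (\<Union>b\<in>B. (c -` b \<inter> space M) \<inter> (h -` W b \<inter> space M))"
  proof (intro set_eqI iffI)
    fix x assume x: "x \<in> (\<lambda>x. c x *\<^sub>R h x) -` S \<inter> space M"
    then have "(c x, h x) \<in> {p :: real \<times> 'v. fst p *\<^sub>R snd p \<in> S}" by simp
    from open_prod_elim[OF oP this] obtain A V where AV: "open A" "open V" "(c x, h x) \<in> A \<times> V"
      "A \<times> V \<subseteq> {p :: real \<times> 'v. fst p *\<^sub>R snd p \<in> S}" .
    from topological_basisE[OF B(2) AV(1)] AV(3) obtain b where b: "b \<in> B" "c x \<in> b" "b \<subseteq> A" by auto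
    have "b \<times> V \<subseteq> {p :: real \<times> 'v. fst p *\<^sub>R snd p \<in> S}" using b(3) AV(4) by auto
    then have "h x \<in> W b" unfolding W_def using AV(2,3) by auto
    then show "x \<in> (\<Union>b\<in>B. (c -` b \<inter> space M) \<inter> (h -` W b \<inter> space M))" using b x by auto
  next
    fix x assume "x \<in> (\<Union>b\<in>B. (c -` b \<inter> space M) \<inter> (h -` W b \<inter> space M))"
    then obtain b where b: "b \<in> B" "c x \<in> b" "h x \<in> W b" "x \<in> space M" by auto
    then obtain V where "open V" "b \<times> V \<subseteq> {p :: real \<times> 'v. fst p *\<^sub>R snd p \<in> S}" "h x \<in> V"
      unfolding W_def by auto
    then show "x \<in> (\<lambda>x. c x *\<^sub>R h x) -` S \<inter> space M" using b by auto
  qed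
  show "(\<lambda>x. c x *\<^sub>R h x) -` S \<inter> space M \<in> sets M"
    unfolding eqs
  proof (rule sets.countable_UN''[OF B(1)])
    fix b assume "b \<in> B"
    then have "open b" using topological_basis_open[OF B(2)] by blast
    then show "(c -` b \<inter> space M) \<inter> (h -` W b \<inter> space M) \<in> sets M"
      using Wo[of b] by (intro sets.Int measurable_sets[OF c] measurable_sets[OF h]) auto
  qed
qed



lemma main:
  fixes p0 p1 q0 q1 p q :: ennreal and s0 s1 s :: real
    and h :: "real \<times> (real ^ ('n::finite)) \<Rightarrow> 'v::real_normed_vector"
  assumes p0: "p0 > 0" and p1: "p1 > 0" and q0: "q0 > 0" and q1: "q1 > 0"
    and pp: "inverse p = inverse p0 + inverse p1"
    and qq: "inverse q = inverse q0 + inverse q1"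
    and ss: "s = s0 + s1"
    and hZ: "h \<in> Z_space p q s"
  shows "\<exists>(F :: real \<times> (real ^ 'n) \<Rightarrow> 'v) (G :: real \<times> (real ^ 'n) \<Rightarrow> real).
          F \<in> Z_space p0 q0 s0 \<and> G \<in> Z_space p1 q1 s1 \<and>
          (\<forall>x. fst x > 0 \<longrightarrow> h x = G x *\<^sub>R F x) \<and>
          Z_norm p0 q0 s0 F * Z_norm p1 q1 s1 G \<le> ennreal 1 * Z_norm p q s h"
proof -
  have hm: "h \<in> borel_measurable lebesgue" using hZ by (simp add: Z_space_def)
  have Nfin: "Z_norm p q s h < \<infinity>" using hZ by (simp add: Z_space_def)
  note ep = exps[OF p0 p1 pp] and eq = exps[OF q0 q1 qq]
  define P where "P = enn2real p"
  define P0 where "P0 = enn2real p0"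
  define P1 where "P1 = enn2real p1"
  define Q where "Q = enn2real q"
  define Q0 where "Q0 = enn2real q0"
  define Q1 where "Q1 = enn2real q1"
  define \<theta>0 where "\<theta>0 = (if p = \<infinity> then 1 else P * inverse P0)"
  define \<theta>1 where "\<theta>1 = (if p = \<infinity> then 0 else P * inverse P1)"
  define \<phi>0 where "\<phi>0 = (if q = \<infinity> then 1 else Q * inverse Q0)"
  define \<phi>1 where "\<phi>1 = (if q = \<infinity> then 0 else Q * inverse Q1)"
  have pos_fin: "x > 0 \<Longrightarrow> x \<noteq> \<infinity> \<Longrightarrow> enn2real x > 0" for x :: ennreal
    by (simp add: enn2real_positive_iff top.not_eq_extremum)
  have Ppos: "p \<noteq> \<infinity> \<Longrightarrow> P > 0" using ep(1) pos_fin P_def by blast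
  have Qpos: "q \<noteq> \<infinity> \<Longrightarrow> Q > 0" using eq(1) pos_fin Q_def by blast
  have \<theta>sum: "\<theta>0 + \<theta>1 = 1"
  proof (cases "p = \<infinity>")
    case False
    then show ?thesis using exps_real[OF p0 p1 pp False]
      by (simp add: \<theta>0_def \<theta>1_def P_def P0_def P1_def distrib_left)
  qed (simp add: \<theta>0_def \<theta>1_def)
  have \<phi>sum: "\<phi>0 + \<phi>1 = 1"
  proof (cases "q = \<infinity>")
    case False
    then show ?thesis using exps_real[OF q0 q1 qq False]
      by (simp add: \<phi>0_def \<phi>1_def Q_def Q0_def Q1_def distrib_left)
  qed (simp add: \<phi>0_def \<phi>1_def)
  have \<theta>0P: "\<theta>0 * P0 = P" if "p0 \<noteq> \<infinity>"
  proof -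
    have "p \<noteq> \<infinity>" using ep(2) that by simp
    moreover have "P0 > 0" using pos_fin[OF p0 that] P0_def by simp
    ultimately show ?thesis by (simp add: \<theta>0_def)
  qed
  have \<theta>1P: "\<theta>1 * P1 = P" if "p1 \<noteq> \<infinity>"
  proof -
    have "p \<noteq> \<infinity>" using ep(2) that by simp
    moreover have "P1 > 0" using pos_fin[OF p1 that] P1_def by simp
    ultimately show ?thesis by (simp add: \<theta>1_def)
  qed
  have \<theta>0z: "\<theta>0 = 0" if "p0 = \<infinity>" "p \<noteq> \<infinity>" using that by (simp add: \<theta>0_def P0_def)
  have \<theta>1z: "\<theta>1 = 0" if "p1 = \<infinity>" "p \<noteq> \<infinity>" using that by (simp add: \<theta>1_def P1_def)
  have \<phi>0Q: "q \<noteq> \<infinity> \<and> \<phi>0 * Q0 = Q \<and> Q0 > 0" if "q0 \<noteq> \<infinity>"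
  proof -
    have "q \<noteq> \<infinity>" using eq(2) that by simp
    moreover have "Q0 > 0" using pos_fin[OF q0 that] Q0_def by simp
    ultimately show ?thesis by (simp add: \<phi>0_def)
  qed
  have \<phi>1Q: "q \<noteq> \<infinity> \<and> \<phi>1 * Q1 = Q \<and> Q1 > 0" if "q1 \<noteq> \<infinity>"
  proof -
    have "q \<noteq> \<infinity>" using eq(2) that by simp
    moreover have "Q1 > 0" using pos_fin[OF q1 that] Q1_def by simp
    ultimately show ?thesis by (simp add: \<phi>1_def)
  qed
  have \<phi>0z: "\<phi>0 = 0" if "q0 = \<infinity>" "q \<noteq> \<infinity>" using that by (simp add: \<phi>0_def Q0_def)
  have \<phi>0one: "\<phi>0 = 1" if "q = \<infinity>" using that by (simp add: \<phi>0_def)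
  have \<phi>1z: "\<phi>1 = 0" if "q1 = \<infinity>" using that by (simp add: \<phi>1_def Q1_def)
  define a where "a km = local_Lq q h km" for km :: "int \<times> (int ^ 'n)"
  define ar where "ar km = enn2real (a km)" for km
  have afin: "a km < top" for km unfolding a_def using a_fin[OF hZ] by simp
  have a_eq: "a km = ennreal (ar km)" for km using afin[of km] unfolding ar_def
    by (cases "a km" rule: ennreal_cases) auto
  have ar_nn: "ar km \<ge> 0" for km by (simp add: ar_def)
  define good where "good km \<longleftrightarrow> ar km > 0" for km
  define b where "b km = dyadic_len km powr (- s) * ar km" for km
  define X where "X km = dyadic_len km powr s0 * b km powr \<theta>0" for km
  define Y where "Y km = dyadic_len km powr s1 * b km powr \<theta>1" for km
  have lpos: "dyadic_len km > 0" for km by (rule dyadic_len_pos)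
  have b_pos: "b km > 0" if "good km" for km using that lpos[of km] by (simp add: b_def good_def)
  have X_pos: "X km > 0" if "good km" for km using b_pos[OF that] lpos[of km] by (simp add: X_def)
  have Y_pos: "Y km > 0" if "good km" for km using b_pos[OF that] lpos[of km] by (simp add: Y_def)
  have XY: "X km * Y km = ar km" if "good km" for km
  proof -
    have "X km * Y km = (dyadic_len km powr s0 * dyadic_len km powr s1) * (b km powr \<theta>0 * b km powr \<theta>1)"
      by (simp add: X_def Y_def mult_ac)
    also have "\<dots> = dyadic_len km powr s * b km"
      using b_pos[OF that] by (simp add: powr_add[symmetric] ss \<theta>sum)
    also have "\<dots> = ar km" using lpos[of km]
      by (simp add: b_def mult.assoc[symmetric] powr_add[symmetric])
    finally show ?thesis .
  qed
  have lX: "dyadic_len km powr (- s0) * X km = b km powr \<theta>0" for km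
    using lpos[of km] by (simp add: X_def mult.assoc[symmetric] powr_add[symmetric])
  have lY: "dyadic_len km powr (- s1) * Y km = b km powr \<theta>1" for km
    using lpos[of km] by (simp add: Y_def mult.assoc[symmetric] powr_add[symmetric])
  have lb: "ennreal (dyadic_len km powr (- s)) * a km = ennreal (b km)" for km
    by (simp add: a_eq b_def ennreal_mult ar_nn)
  define \<Phi>0 where "\<Phi>0 km x = (X km * (norm (h x) / ar km) powr \<phi>0 / norm (h x)) *\<^sub>R h x" for km x
  define \<Phi>1 where "\<Phi>1 km x = Y km * (norm (h x) / ar km) powr \<phi>1" for km x
  define idx where "idx x = (THE km :: int \<times> (int ^ 'n). x \<in> whitney_box km)" for x :: "real \<times> (real ^ 'n)"
  define F where "F x = (if \<exists>km. x \<in> whitney_box km \<and> good km then \<Phi>0 (idx x) x else h x)" for x :: "real \<times> (real ^ 'n)"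
  define G where "G x = (if \<exists>km. x \<in> whitney_box km \<and> good km then \<Phi>1 (idx x) x
                         else (if h x = 0 then 0 else 1 :: real))" for x :: "real \<times> (real ^ 'n)"
  have idx: "idx x = km" if "x \<in> whitney_box km" for x km
    unfolding idx_def using that box_unique by blast
  have exg: "(\<exists>km'. x \<in> whitney_box km' \<and> good km') \<longleftrightarrow> good km" if "x \<in> whitney_box km" for x km
    using that box_unique by blast
  have Fbox: "F x = (if good km then \<Phi>0 km x else h x)" if "x \<in> whitney_box km" for x km
    using exg[OF that] idx[OF that] unfolding F_def by simp
  have Gbox: "G x = (if good km then \<Phi>1 km x else (if h x = 0 then 0 else 1))"
    if "x \<in> whitney_box km" for x km
    using exg[OF that] idx[OF that] unfolding G_def by simp
  have prod: "h x = G x *\<^sub>R F x" for x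
  proof (cases "\<exists>km. x \<in> whitney_box km \<and> good km")
    case True
    then obtain km where km: "x \<in> whitney_box km" "good km" by blast
    have FG: "F x = \<Phi>0 km x" "G x = \<Phi>1 km x" using Fbox[OF km(1)] Gbox[OF km(1)] km(2) by auto
    show ?thesis
    proof (cases "h x = 0")
      case True then show ?thesis using FG by (simp add: \<Phi>0_def)
    next
      case False
      define u where "u = norm (h x) / ar km"
      have arp: "ar km > 0" using km(2) good_def by simp
      have nh: "norm (h x) > 0" using False by simp
      have up: "u > 0" using arp nh by (simp add: u_def)
      have "Y km * u powr \<phi>1 * (X km * u powr \<phi>0 / norm (h x)) = (X km * Y km) * (u powr \<phi>0 * u powr \<phi>1) / norm (h x)"
        by (simp add: field_simps)
      also have "\<dots> = ar km * u / norm (h x)" using up by (simp add: XY[OF km(2)] powr_add[symmetric] \<phi>sum)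
      also have "\<dots> = 1" using arp nh by (simp add: u_def)
      finally have "Y km * u powr \<phi>1 * (X km * u powr \<phi>0 / norm (h x)) = 1" .
      then show ?thesis using FG by (simp add: \<Phi>0_def \<Phi>1_def u_def)
    qed
  next
    case False
    have "F x = h x" unfolding F_def by (rule if_not_P[OF False])
    moreover have "G x = (if h x = 0 then 0 else 1)" unfolding G_def by (rule if_not_P[OF False])
    ultimately show ?thesis by simp
  qed
  have nF: "norm (F x) = X km * (norm (h x) / ar km) powr \<phi>0" if "x \<in> whitney_box km" "good km" for x km
  proof -
    have "F x = \<Phi>0 km x" using Fbox[OF that(1)] that(2) by simp
    moreover have "norm (\<Phi>0 km x) = X km * (norm (h x) / ar km) powr \<phi>0"
    proof (cases "h x = 0")
      case False
      have "0 \<le> X km * (norm (h x) / ar km) powr \<phi>0"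
        using X_pos[OF that(2)] by simp
      then show ?thesis using False by (simp add: \<Phi>0_def abs_of_nonneg)
    qed (simp add: \<Phi>0_def)
    ultimately show ?thesis by simp
  qed
  have nG: "norm (G x) = Y km * (norm (h x) / ar km) powr \<phi>1" if "x \<in> whitney_box km" "good km" for x km
  proof -
    have "G x = \<Phi>1 km x" using Gbox[OF that(1)] that(2) by simp
    then show ?thesis using Y_pos[OF that(2)] by (simp add: \<Phi>1_def)
  qed
  have nhm: "(\<lambda>x. norm (h x)) \<in> borel_measurable lebesgue" using hm by measurable
  have \<Phi>0m: "(\<lambda>x. \<Phi>0 km x) \<in> borel_measurable lebesgue" for km
  proof -
    have c: "(\<lambda>x. X km * (norm (h x) / ar km) powr \<phi>0 / norm (h x)) \<in> borel_measurable lebesgue"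
      using nhm by measurable
    show ?thesis unfolding \<Phi>0_def by (rule scaleR_meas[OF c hm])
  qed
  have \<Phi>1m: "(\<lambda>x. \<Phi>1 km x) \<in> borel_measurable lebesgue" for km
    unfolding \<Phi>1_def using nhm by measurable
  have Hm: "(\<lambda>x. if h x = 0 then 0 else 1 :: real) \<in> borel_measurable lebesgue" using hm by measurable
  have Fm: "F \<in> borel_measurable lebesgue"
  proof (rule piecewise_boxes)
    fix km :: "int \<times> (int ^ 'n)"
    show "\<exists>g \<in> borel_measurable lebesgue. \<forall>x \<in> whitney_box km. F x = g x"
    proof (cases "good km")
      case True then show ?thesis using \<Phi>0m[of km] Fbox by (intro bexI[of _ "\<lambda>x. \<Phi>0 km x"]) auto
    next
      case False then show ?thesis using hm Fbox by (intro bexI[of _ h]) auto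
    qed
  next
    show "\<exists>g \<in> borel_measurable lebesgue. \<forall>x. (\<forall>km :: int \<times> (int ^ 'n). x \<notin> whitney_box km) \<longrightarrow> F x = g x"
      using hm by (intro bexI[of _ h]) (auto simp: F_def)
  qed
  have Gm: "G \<in> borel_measurable lebesgue"
  proof (rule piecewise_boxes)
    fix km :: "int \<times> (int ^ 'n)"
    show "\<exists>g \<in> borel_measurable lebesgue. \<forall>x \<in> whitney_box km. G x = g x"
    proof (cases "good km")
      case True then show ?thesis using \<Phi>1m[of km] Gbox by (intro bexI[of _ "\<lambda>x. \<Phi>1 km x"]) auto
    next
      case False then show ?thesis using Hm Gbox by (intro bexI[of _ "\<lambda>x. if h x = 0 then 0 else 1 :: real"]) auto
    qed
  next
    show "\<exists>g \<in> borel_measurable lebesgue. \<forall>x. (\<forall>km :: int \<times> (int ^ 'n). x \<notin> whitney_box km) \<longrightarrow> G x = g x"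
      using Hm by (intro bexI[of _ "\<lambda>x. if h x = 0 then 0 else 1 :: real"]) (auto simp: G_def)
  qed
  have la: "local_Lq q h km = ennreal (ar km)" for km using a_eq[of km] by (simp add: a_def)
  have bad_zero: "AE x in lebesgue. x \<in> whitney_box km \<longrightarrow> h x = 0" if "\<not> good km" for km
  proof -
    have ar0: "ar km = 0" using that ar_nn[of km] by (simp add: good_def)
    show ?thesis
    proof (cases "q = \<infinity>")
      case True
      have "AE x in lebesgue. x \<in> whitney_box km \<longrightarrow> ennreal (norm (h x)) \<le> local_Lq \<infinity> h km"
        by (rule inf_attained)
      then show ?thesis using la[of km] ar0 True by (auto elim!: eventually_mono)
    next
      case False
      show ?thesis by (rule fin_zero[OF False eq(1) hm]) (use la[of km] ar0 in simp)
    qed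
  qed
  have LF_bad: "local_Lq q0 F km = 0" if "\<not> good km" for km
    using bad_zero[OF that] q0
    by (intro local_zero) (auto elim!: eventually_mono simp: Fbox that)
  have LG_bad: "local_Lq q1 G km = 0" if "\<not> good km" for km
    using bad_zero[OF that] q1
    by (intro local_zero) (auto elim!: eventually_mono simp: Gbox that)
  have wq: "wint q h km = ennreal (ar km powr Q)" if "good km" "q \<noteq> \<infinity>" for km
    using fin_val[OF that(2) eq(1) la[of km]] that(1) by (simp add: good_def Q_def)
  have LF_good: "local_Lq q0 F km \<le> ennreal (X km)" if g: "good km" for km
  proof (rule good_local[where h = h and A = "ar km" and \<phi> = \<phi>0 and q = q])
    show "norm (F x) = X km * (norm (h x) / ar km) powr \<phi>0" if "x \<in> whitney_box km" for x
      by (rule nF[OF that g])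
    show "X km > 0" "ar km > 0" using X_pos[OF g] g by (auto simp: good_def)
    show "h \<in> borel_measurable lebesgue" by (rule hm)
    show "\<phi>0 * enn2real q0 = enn2real q \<and> enn2real q0 > 0 \<and> enn2real q > 0 \<and>
               wint q h km = ennreal (ar km powr enn2real q)" if "q0 \<noteq> \<infinity>"
      using \<phi>0Q[OF that] Qpos wq[OF g] by (auto simp: Q_def Q0_def)
    show "AE x in lebesgue. x \<in> whitney_box km \<longrightarrow> (norm (h x) / ar km) powr \<phi>0 \<le> 1" if "q0 = \<infinity>"
    proof (cases "q = \<infinity>")
      case True
      have "AE x in lebesgue. x \<in> whitney_box km \<longrightarrow> ennreal (norm (h x)) \<le> local_Lq \<infinity> h km"
        by (rule inf_attained)
      then show ?thesis
      proof (rule eventually_mono, intro impI)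
        fix x assume "x \<in> whitney_box km \<longrightarrow> ennreal (norm (h x)) \<le> local_Lq \<infinity> h km" "x \<in> whitney_box km"
        then have "norm (h x) \<le> ar km" using la[of km] True ar_nn[of km] by simp
        then show "(norm (h x) / ar km) powr \<phi>0 \<le> 1" using \<phi>0one[OF True] g by (simp add: good_def)
      qed
    next
      case False
      then show ?thesis using \<phi>0z[OF that False] ar_nn[of km] by (intro AE_I2 impI pw0) simp
    qed
  qed
  have LG_good: "local_Lq q1 G km \<le> ennreal (Y km)" if g: "good km" for km
  proof (rule good_local[where h = h and A = "ar km" and \<phi> = \<phi>1 and q = q])
    show "norm (G x) = Y km * (norm (h x) / ar km) powr \<phi>1" if "x \<in> whitney_box km" for x
      by (rule nG[OF that g])
    show "Y km > 0" "ar km > 0" using Y_pos[OF g] g by (auto simp: good_def)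
    show "h \<in> borel_measurable lebesgue" by (rule hm)
    show "\<phi>1 * enn2real q1 = enn2real q \<and> enn2real q1 > 0 \<and> enn2real q > 0 \<and>
               wint q h km = ennreal (ar km powr enn2real q)" if "q1 \<noteq> \<infinity>"
      using \<phi>1Q[OF that] Qpos wq[OF g] by (auto simp: Q_def Q1_def)
    show "AE x in lebesgue. x \<in> whitney_box km \<longrightarrow> (norm (h x) / ar km) powr \<phi>1 \<le> 1" if "q1 = \<infinity>"
      using \<phi>1z[OF that] ar_nn[of km] by (intro AE_I2 impI pw0) simp
  qed
  define BF where "BF km = (if good km then ennreal (b km powr \<theta>0) else 0)" for km
  define BG where "BG km = (if good km then ennreal (b km powr \<theta>1) else 0)" for km
  have LFB: "ennreal (dyadic_len km powr (- s0)) * local_Lq q0 F km \<le> BF km" for km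
  proof (cases "good km")
    case True
    have "ennreal (dyadic_len km powr (- s0)) * local_Lq q0 F km \<le> ennreal (dyadic_len km powr (- s0)) * ennreal (X km)"
      by (rule mult_left_mono[OF LF_good[OF True]]) simp
    also have "\<dots> = ennreal (b km powr \<theta>0)" using lX[of km] ennreal_mult'[of "dyadic_len km powr (- s0)" "X km"] by simp
    finally show ?thesis using True by (simp add: BF_def)
  qed (simp add: LF_bad BF_def)
  have LGB: "ennreal (dyadic_len km powr (- s1)) * local_Lq q1 G km \<le> BG km" for km
  proof (cases "good km")
    case True
    have "ennreal (dyadic_len km powr (- s1)) * local_Lq q1 G km \<le> ennreal (dyadic_len km powr (- s1)) * ennreal (Y km)"
      by (rule mult_left_mono[OF LG_good[OF True]]) simp
    also have "\<dots> = ennreal (b km powr \<theta>1)" using lY[of km] ennreal_mult'[of "dyadic_len km powr (- s1)" "Y km"] by simp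
    finally show ?thesis using True by (simp add: BG_def)
  qed (simp add: LG_bad BG_def)
  define T where "T km = ennreal (dyadic_len km ^ CARD('n)) *
      enn_powr (ennreal (dyadic_len km powr (- s)) * local_Lq q h km) P" for km :: "int \<times> (int ^ 'n)"
  have Tb: "T km = ennreal (dyadic_len km ^ CARD('n)) * ennreal (b km powr P)" for km
    using lb[of km] b_pos[of km] ar_nn[of km] lpos[of km]
    by (simp add: T_def a_def ep_ennreal b_def)
  have TF: "ennreal (dyadic_len km ^ CARD('n)) * enn_powr (BF km) P0 \<le> T km" if "p0 \<noteq> \<infinity>" for km
  proof (cases "good km")
    case True
    have "enn_powr (BF km) P0 = ennreal (b km powr P)"
      using True b_pos[OF True] \<theta>0P[OF that] by (simp add: BF_def ep_ennreal powr_powr)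
    then show ?thesis by (simp add: Tb)
  qed (simp add: BF_def)
  have TG: "ennreal (dyadic_len km ^ CARD('n)) * enn_powr (BG km) P1 \<le> T km" if "p1 \<noteq> \<infinity>" for km
  proof (cases "good km")
    case True
    have "enn_powr (BG km) P1 = ennreal (b km powr P)"
      using True b_pos[OF True] \<theta>1P[OF that] by (simp add: BG_def ep_ennreal powr_powr)
    then show ?thesis by (simp add: Tb)
  qed (simp add: BG_def)
  have BF0: "BF km \<le> 1" if "\<theta>0 = 0" for km using b_pos[of km] that by (simp add: BF_def)
  have BG0: "BG km \<le> 1" if "\<theta>1 = 0" for km using b_pos[of km] that by (simp add: BG_def)
  let ?N = "Z_norm p q s h"
  have "\<exists>UF UG. Z_norm p0 q0 s0 F \<le> UF \<and> Z_norm p1 q1 s1 G \<le> UG \<and> UF < top \<and> UG < top \<and> UF * UG \<le> ?N"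
  proof (cases "p = \<infinity>")
    case True
    then have pinf: "p0 = \<infinity>" "p1 = \<infinity>" using ep(2) by auto
    have t: "\<theta>0 = 1" "\<theta>1 = 0" using True by (auto simp: \<theta>0_def \<theta>1_def)
    have BFN: "BF km \<le> ?N" for km
    proof (cases "good km")
      case True
      have "BF km = ennreal (dyadic_len km powr (- s)) * a km"
        using True t b_pos[OF True] by (simp add: BF_def lb)
      also have "\<dots> \<le> ?N" unfolding Z_norm_def a_def using \<open>p = \<infinity>\<close> by (auto intro: SUP_upper)
      finally show ?thesis .
    qed (simp add: BF_def)
    have "Z_norm p0 q0 s0 F \<le> ?N"
      using Z_inf_bound[of s0 q0 F ?N] pinf LFB BFN by (meson order.trans)
    moreover have "Z_norm p1 q1 s1 G \<le> 1"
      using Z_inf_bound[of s1 q1 G 1] pinf LGB BG0[OF t(2)] by (meson order.trans)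
    ultimately show ?thesis using Nfin by (intro exI[of _ ?N] exI[of _ 1]) auto
  next
    case False
    have Neq: "?N = enn_powr (\<integral>\<^sup>+ km. T km \<partial>count_space UNIV) (1 / P)"
      using False unfolding Z_norm_def T_def P_def a_def by (simp only: if_False)
    have Ifin: "(\<integral>\<^sup>+ km. T km \<partial>count_space UNIV) < top" using Nfin Neq by (simp add: ep_fin)
    let ?I = "\<integral>\<^sup>+ km. T km \<partial>count_space UNIV"
    have ZFb: "Z_norm p0 q0 s0 F \<le> enn_powr ?I (1 / P0)" if "p0 \<noteq> \<infinity>"
      unfolding P0_def by (rule Z_fin_bound[OF that LFB TF[OF that, unfolded P0_def]])
    have ZGb: "Z_norm p1 q1 s1 G \<le> enn_powr ?I (1 / P1)" if "p1 \<noteq> \<infinity>"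
      unfolding P1_def by (rule Z_fin_bound[OF that LGB TG[OF that, unfolded P1_def]])
    show ?thesis
    proof (cases "p0 = \<infinity>")
      case True
      have p1e: "p1 = p" using ep(3)[OF True] by simp
      then have "p1 \<noteq> \<infinity>" using False by simp
      have "Z_norm p0 q0 s0 F \<le> 1"
        using Z_inf_bound[of s0 q0 F 1] True LFB BF0[OF \<theta>0z[OF True False]] by (meson order.trans)
      moreover have "Z_norm p1 q1 s1 G \<le> ?N" using ZGb[OF \<open>p1 \<noteq> \<infinity>\<close>] Neq p1e by (simp add: P1_def P_def)
      ultimately show ?thesis using Nfin by (intro exI[of _ 1] exI[of _ ?N]) auto
    next
      case p0f: False
      show ?thesis
      proof (cases "p1 = \<infinity>")
        case True
        have p0e: "p0 = p" using ep(4)[OF True] by simp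
        have "Z_norm p1 q1 s1 G \<le> 1"
          using Z_inf_bound[of s1 q1 G 1] True LGB BG0[OF \<theta>1z[OF True False]] by (meson order.trans)
        moreover have "Z_norm p0 q0 s0 F \<le> ?N" using ZFb[OF p0f] Neq p0e by (simp add: P0_def P_def)
        ultimately show ?thesis using Nfin by (intro exI[of _ ?N] exI[of _ 1]) auto
      next
        case p1f: False
        have r: "P * (inverse P0 + inverse P1) = 1" using exps_real[OF p0 p1 pp False] by (simp add: P_def P0_def P1_def)
        have "1 / P0 + 1 / P1 = 1 / P" using r Ppos[OF False] by (simp add: field_simps)
        then have prod: "enn_powr ?I (1 / P0) * enn_powr ?I (1 / P1) = ?N" by (simp add: ep_add Neq)
        show ?thesis
          using ZFb[OF p0f] ZGb[OF p1f] prod Ifin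
          by (intro exI[of _ "enn_powr ?I (1 / P0)"] exI[of _ "enn_powr ?I (1 / P1)"]) (auto simp: ep_fin)
      qed
    qed
  qed
  then obtain UF UG where U: "Z_norm p0 q0 s0 F \<le> UF" "Z_norm p1 q1 s1 G \<le> UG" "UF < top" "UG < top" "UF * UG \<le> ?N"
    by blast
  have "F \<in> Z_space p0 q0 s0" using Fm U(1,3) by (simp add: Z_space_def le_less_trans)
  moreover have "G \<in> Z_space p1 q1 s1" using Gm U(2,4) by (simp add: Z_space_def le_less_trans)
  moreover have "Z_norm p0 q0 s0 F * Z_norm p1 q1 s1 G \<le> ennreal 1 * ?N"
    using mult_mono[OF U(1,2)] U(5) by simp
  ultimately show ?thesis using prod by blast
qed


theorem proposition2p66:
  fixes p0 p1 q0 q1 p q :: ennreal and s0 s1 s :: real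
  assumes "p0 > 0" and "p1 > 0" and "q0 > 0" and "q1 > 0"
    and "inverse p = inverse p0 + inverse p1"
    and "inverse q = inverse q0 + inverse q1"
    and "s = s0 + s1"
  shows "\<exists>C::real. C > 0 \<and>
    (\<forall>h :: real \<times> (real ^ ('n::finite)) \<Rightarrow> 'v::real_normed_vector.
       h \<in> Z_space p q s \<longrightarrow>
       (\<exists>(F :: real \<times> (real ^ 'n) \<Rightarrow> 'v) (G :: real \<times> (real ^ 'n) \<Rightarrow> real).
          F \<in> Z_space p0 q0 s0 \<and> G \<in> Z_space p1 q1 s1 \<and>
          (\<forall>x. fst x > 0 \<longrightarrow> h x = G x *\<^sub>R F x) \<and>
          Z_norm p0 q0 s0 F * Z_norm p1 q1 s1 G \<le> ennreal C * Z_norm p q s h))"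
  using main[OF assms] by (intro exI[of _ 1]) auto

end
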